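(* Let $\mathbb{S}=(S,\Sigma,\{\tau_a\mid a\in L\})$ be an LMP, let $\Sigma_0\subseteq\Sigma$ be a sub-$\sigma$-algebra with $\mathcal{R}(\Sigma_0)=\mathcal{R}^T(\Sigma_0)$, and put $R_0=\mathcal{R}(\Sigma_0)$. Then for every limit ordinal $\lambda$, $\mathcal{R}(\Sigma_\lambda)=\mathcal{R}^T(\Sigma_\lambda)$.
   Context: An LMP is a triple $(S,\Sigma,\{\tau_a\mid a\in L\})$ with $(S,\Sigma)$ a measurable space, $L$ countable, and each $\tau_a:S\times\Sigma\to[0,1]$ a Markov kernel (subprobability measure in the second argument, measurable in the first). For $R\subseteq S\times S$, $A$ is $R$-closed if $x\in A$, $xRs$ imply $s\in A$; $\Sigma(R)$ is the family of $R$-closed members of $\Sigma$. For $\Gamma\subseteq\mathcal{P}(S)$, $\mathcal{R}(\Gamma)=\{(s,t):\forall A\in\Gamma\,(s\in A\iff t\in A)\}$; for $\Lambda\subseteq\Sigma$, $\mathcal{R}^T(\Lambda)=\{(s,t):\forall a\in L\,\forall E\in\Lambda\ \tau_a(s,E)=\tau_a(t,E)\}$. $\mathcal{O}(R)=\mathcal{R}^T(\Sigma(R))$, $\mathcal{G}(\Lambda)=\Sigma(\mathcal{R}^T(\Lambda))$. Iterates: $R_{\alpha+1}=\mathcal{O}(R_\alpha)$, $R_\lambda=\bigcap_{\alpha<\lambda}R_\alpha$ for limit $\lambda$; $\Sigma_{\alpha+1}=\mathcal{G}(\Sigma_\alpha)$, $\Sigma_\lambda=\sigma(\bigcup_{\alpha<\lambda}\Sigma_\alpha)$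 for limit $\lambda$. *)

theory Defs
  imports "HOL-Analysis.Analysis"
begin

definition lmp :: "'a set \<Rightarrow> 'a set set \<Rightarrow> 'l set \<Rightarrow> ('l \<Rightarrow> 'a \<Rightarrow> 'a set \<Rightarrow> real) \<Rightarrow> bool" where
  "lmp S Sig L tau \<longleftrightarrow>
     sigma_algebra S Sig \<and> countable L \<and>
     (\<forall>a\<in>L. \<forall>s\<in>S.
        measure_space S Sig (\<lambda>E. ennreal (tau a s E)) \<and>
        (\<forall>E\<in>Sig. 0 \<le> tau a s E \<and> tau a s E \<le> 1)) \<and>
     (\<forall>a\<in>L. \<forall>E\<in>Sig. (\<lambda>s. tau a s E) \<in> borel_measurable (measure_of S Sig (\<lambda>_. 0)))"

definition R_closed :: "('a \<times> 'a) set \<Rightarrow> 'a set \<Rightarrow> bool" where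
  "R_closed R A \<longleftrightarrow> (\<forall>x s. x \<in> A \<longrightarrow> (x, s) \<in> R \<longrightarrow> s \<in> A)"

definition closed_sets :: "'a set set \<Rightarrow> ('a \<times> 'a) set \<Rightarrow> 'a set set" where
  "closed_sets Sig R = {A \<in> Sig. R_closed R A}"

definition rel_of :: "'a set \<Rightarrow> 'a set set \<Rightarrow> ('a \<times> 'a) set" where
  "rel_of S Gm = {(s, t). s \<in> S \<and> t \<in> S \<and> (\<forall>A\<in>Gm. s \<in> A \<longleftrightarrow> t \<in> A)}"

definition relT_of :: "'a set \<Rightarrow> 'l set \<Rightarrow> ('l \<Rightarrow> 'a \<Rightarrow> 'a set \<Rightarrow> real) \<Rightarrow> 'a set set \<Rightarrow> ('a \<times> 'a) set" where
  "relT_of S L tau Lam = {(s, t). s \<in> S \<and> t \<in> S \<and> (\<forall>a\<in>L. \<forall>E\<in>Lam. tau a s E = tau a t E)}"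

definition G_op :: "'a set \<Rightarrow> 'a set set \<Rightarrow> 'l set \<Rightarrow> ('l \<Rightarrow> 'a \<Rightarrow> 'a set \<Rightarrow> real) \<Rightarrow> 'a set set \<Rightarrow> 'a set set" where
  "G_op S Sig L tau Lam = closed_sets Sig (relT_of S L tau Lam)"

text \<open>Ordinals are represented by elements of an arbitrary well-ordered type 'i.\<close>
definition is_succ_of :: "'i::wellorder \<Rightarrow> 'i \<Rightarrow> bool" where
  "is_succ_of \<alpha> \<beta> \<longleftrightarrow> \<beta> < \<alpha> \<and> (\<forall>\<gamma>. \<not> (\<beta> < \<gamma> \<and> \<gamma> < \<alpha>))"

definition is_limit :: "'i::wellorder \<Rightarrow> bool" where
  "is_limit l \<longleftrightarrow> (\<exists>\<beta>. \<beta> < l) \<and> (\<forall>\<beta><l. \<exists>\<gamma>. \<beta> < \<gamma> \<and> \<gamma> < l)"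

definition Sig_iter :: "'a set \<Rightarrow> 'a set set \<Rightarrow> 'l set \<Rightarrow> ('l \<Rightarrow> 'a \<Rightarrow> 'a set \<Rightarrow> real)
    \<Rightarrow> 'a set set \<Rightarrow> 'i::wellorder \<Rightarrow> 'a set set" where
  "Sig_iter S Sig L tau Sig0 = wfrec {(x, y). x < y}
     (\<lambda>f \<alpha>. if \<exists>\<beta>. is_succ_of \<alpha> \<beta> then G_op S Sig L tau (f (THE \<beta>. is_succ_of \<alpha> \<beta>))
            else if \<forall>\<beta>. \<not> \<beta> < \<alpha> then Sig0
            else sigma_sets S (\<Union>\<beta>\<in>{\<beta>. \<beta> < \<alpha>}. f \<beta>))"

end

theory Submission
  imports Defs
begin

lemma succ_unique: "is_succ_of (a::'i::wellorder) b \<Longrightarrow> is_succ_of a b' \<Longrightarrow> b = b'"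
  unfolding is_succ_of_def by (metis neqE)

lemma the_succ: "is_succ_of (a::'i::wellorder) b \<Longrightarrow> (THE b. is_succ_of a b) = b"
  using succ_unique by blast

lemma G_mono: "A \<subseteq> B \<Longrightarrow> G_op S Sig L tau A \<subseteq> G_op S Sig L tau B"
  unfolding G_op_def closed_sets_def R_closed_def relT_of_def by blast

lemma G_sub: "G_op S Sig L tau A \<subseteq> Sig"
  unfolding G_op_def closed_sets_def by blast

lemma G_sigma:
  assumes "sigma_algebra S Sig"
  shows "sigma_algebra S (G_op S Sig L tau A)"
proof -
  interpret sigma_algebra S Sig by fact
  let ?R = "relT_of S L tau A"
  have sym: "(x,y) \<in> ?R \<Longrightarrow> (y,x) \<in> ?R" for x y unfolding relT_of_def by auto
  have inS: "(x,y) \<in> ?R \<Longrightarrow> y \<in> S" for x y unfolding relT_of_def by auto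
  show ?thesis unfolding sigma_algebra_iff2
  proof (intro conjI ballI allI impI)
    show "G_op S Sig L tau A \<subseteq> Pow S" using G_sub sets_into_space by blast
    show "{} \<in> G_op S Sig L tau A" unfolding G_op_def closed_sets_def R_closed_def by auto
  next
    fix s assume "s \<in> G_op S Sig L tau A"
    then show "S - s \<in> G_op S Sig L tau A"
      unfolding G_op_def closed_sets_def R_closed_def using sym inS by blast
  next
    fix F :: "nat \<Rightarrow> _" assume "range F \<subseteq> G_op S Sig L tau A"
    then show "(\<Union>i. F i) \<in> G_op S Sig L tau A"
      unfolding G_op_def closed_sets_def R_closed_def by blast
  qed
qed

lemma sa_top: "sigma_algebra S M \<Longrightarrow> S \<in> M"
proof - assume "sigma_algebra S M" then interpret sigma_algebra S M . show ?thesis by auto qed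

lemma sa_Int: "sigma_algebra S M \<Longrightarrow> A \<in> M \<Longrightarrow> B \<in> M \<Longrightarrow> A \<inter> B \<in> M"
proof - assume "sigma_algebra S M" then interpret sigma_algebra S M . show "A \<in> M \<Longrightarrow> B \<in> M \<Longrightarrow> A \<inter> B \<in> M" by auto qed

context
  fixes S :: "'a set" and Sig Sig0 :: "'a set set" and L :: "'l set"
    and tau :: "'l \<Rightarrow> 'a \<Rightarrow> 'a set \<Rightarrow> real"
begin

abbreviation "SI \<equiv> (Sig_iter S Sig L tau Sig0 :: 'i::wellorder \<Rightarrow> _)"

lemma SI_unfold:
  "SI (a::'i::wellorder) = (if \<exists>\<beta>. is_succ_of a \<beta> then G_op S Sig L tau (SI (THE \<beta>. is_succ_of a \<beta>))
            else if \<forall>\<beta>. \<not> \<beta> < a then Sig0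
            else sigma_sets S (\<Union>\<beta>\<in>{\<beta>. \<beta> < a}. SI \<beta>))"
  unfolding Sig_iter_def
proof (rule wfrec_fixpoint[THEN fun_cong])
  show "wf {(x, y::'i). x < y}" by (rule Wellfounded.wellorder_class.wf)
  show "adm_wf {(x, y::'i). x < y}
     (\<lambda>f \<alpha>. if \<exists>\<beta>. is_succ_of \<alpha> \<beta> then G_op S Sig L tau (f (THE \<beta>. is_succ_of \<alpha> \<beta>))
            else if \<forall>\<beta>. \<not> \<beta> < \<alpha> then Sig0
            else sigma_sets S (\<Union>\<beta>\<in>{\<beta>. \<beta> < \<alpha>}. f \<beta>))"
    unfolding adm_wf_def
  proof (intro allI impI)
    fix f g :: "'i \<Rightarrow> 'a set set" and x :: 'i
    assume h: "\<forall>z. (z, x) \<in> {(x, y). x < y} \<longrightarrow> f z = g z"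
    show "(if \<exists>\<beta>. is_succ_of x \<beta> then G_op S Sig L tau (f (THE \<beta>. is_succ_of x \<beta>))
            else if \<forall>\<beta>. \<not> \<beta> < x then Sig0
            else sigma_sets S (\<Union>\<beta>\<in>{\<beta>. \<beta> < x}. f \<beta>)) =
          (if \<exists>\<beta>. is_succ_of x \<beta> then G_op S Sig L tau (g (THE \<beta>. is_succ_of x \<beta>))
            else if \<forall>\<beta>. \<not> \<beta> < x then Sig0
            else sigma_sets S (\<Union>\<beta>\<in>{\<beta>. \<beta> < x}. g \<beta>))"
    proof (cases "\<exists>\<beta>. is_succ_of x \<beta>")
      case True
      then obtain b where b: "is_succ_of x b" by blast
      then have "b < x" unfolding is_succ_of_def by auto
      then show ?thesis using h b the_succ[OF b] by auto
    next
      case False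
      have "(\<Union>\<beta>\<in>{\<beta>. \<beta> < x}. f \<beta>) = (\<Union>\<beta>\<in>{\<beta>. \<beta> < x}. g \<beta>)" using h by auto
      then show ?thesis using False by simp
    qed
  qed
qed

lemma SI_succ: "is_succ_of a b \<Longrightarrow> SI a = G_op S Sig L tau (SI b)"
  using SI_unfold[of a] the_succ by metis

lemma SI_limit: "is_limit a \<Longrightarrow> SI a = sigma_sets S (\<Union>\<beta>\<in>{\<beta>. \<beta> < a}. SI \<beta>)"
proof -
  assume l: "is_limit a"
  have "\<not> is_succ_of a b" for b using l unfolding is_limit_def is_succ_of_def by blast
  moreover have "\<exists>b. b < a" using l unfolding is_limit_def by blast
  ultimately show ?thesis using SI_unfold[of a] by auto
qed

lemma succ_below:
  assumes "is_limit (l::'i::wellorder)" "b < l"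
  shows "\<exists>c. is_succ_of c b \<and> c < l"
proof -
  obtain g where g: "b < g" "g < l" using assms unfolding is_limit_def by blast
  define c where "c = (LEAST c. b < c)"
  have bc: "b < c" unfolding c_def using g(1) by (rule LeastI)
  have cg: "c \<le> g" unfolding c_def using g(1) by (rule Least_le)
  have "is_succ_of c b" unfolding is_succ_of_def using bc
    by (metis c_def not_less_Least)
  then show ?thesis using cg g(2) by auto
qed

lemma SI_mono:
  assumes "Sig0 \<subseteq> Sig" "rel_of S Sig0 = relT_of S L tau Sig0" "sigma_algebra S Sig"
  shows "(\<forall>b<a. SI b \<subseteq> SI (a::'i::wellorder)) \<and> SI a \<subseteq> G_op S Sig L tau (SI a)"
proof (induction a rule: less_induct)
  case (less a)
  show ?case
  proof (cases "\<exists>\<beta>. is_succ_of a \<beta>")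
    case True
    then obtain b where b: "is_succ_of a b" by blast
    have ba: "b < a" using b unfolding is_succ_of_def by auto
    have eq: "SI a = G_op S Sig L tau (SI b)" using SI_succ[OF b] .
    have IH: "\<forall>c<b. SI c \<subseteq> SI b" "SI b \<subseteq> SI a" using less[OF ba] eq by auto
    have 1: "\<forall>c<a. SI c \<subseteq> SI a"
    proof (intro allI impI)
      fix c assume "c < a"
      then have "c \<le> b" using b unfolding is_succ_of_def by (metis not_le)
      then show "SI c \<subseteq> SI a" using IH by (metis order_le_less subset_trans)
    qed
    show ?thesis using 1 G_mono[OF IH(2), of S Sig L tau] eq by simp
  next
    case False
    note nsucc = False
    show ?thesis
    proof (cases "\<forall>\<beta>. \<not> \<beta> < a")
      case True
      then have eq: "SI a = Sig0" using SI_unfold[of a] nsucc by auto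
      have "Sig0 \<subseteq> G_op S Sig L tau Sig0"
        unfolding G_op_def closed_sets_def R_closed_def using assms(1,2)
        unfolding rel_of_def by blast
      then show ?thesis using True eq by auto
    next
      case False
      then have eq: "SI a = sigma_sets S (\<Union>\<beta>\<in>{\<beta>. \<beta> < a}. SI \<beta>)" using SI_unfold[of a] nsucc by auto
      have 1: "\<forall>c<a. SI c \<subseteq> SI a" using eq by (auto intro: sigma_sets.Basic)
      have "(\<Union>\<beta>\<in>{\<beta>. \<beta> < a}. SI \<beta>) \<subseteq> G_op S Sig L tau (SI a)"
      proof (rule UN_least)
        fix b assume "b \<in> {\<beta>. \<beta> < a}"
        then have b: "b < a" by simp
        have "SI b \<subseteq> G_op S Sig L tau (SI b)" using less[OF b] by blast
        also have "\<dots> \<subseteq> G_op S Sig L tau (SI a)" using 1 b by (intro G_mono) blast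
        finally show "SI b \<subseteq> G_op S Sig L tau (SI a)" .
      qed
      then have "SI a \<subseteq> G_op S Sig L tau (SI a)"
        using eq sigma_algebra.sigma_sets_subset[OF G_sigma[OF assms(3)]] by metis
      then show ?thesis using 1 by blast
    qed
  qed
qed

lemma SI_sigma:
  assumes "Sig0 \<subseteq> Sig" "rel_of S Sig0 = relT_of S L tau Sig0" "sigma_algebra S Sig"
    "sigma_algebra S Sig0"
  shows "sigma_algebra S (SI (a::'i::wellorder))"
proof (cases "\<exists>\<beta>. is_succ_of a \<beta>")
  case True
  then show ?thesis using SI_unfold[of a] G_sigma[OF assms(3)] by auto
next
  case nsucc: False
  show ?thesis
  proof (cases "\<forall>\<beta>. \<not> \<beta> < a")
    case True
    then show ?thesis using SI_unfold[of a] nsucc assms(4) by auto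
  next
    case False
    then have eq: "SI a = sigma_sets S (\<Union>\<beta>\<in>{\<beta>. \<beta> < a}. SI \<beta>)" using SI_unfold[of a] nsucc by auto
    have "SI b \<subseteq> Pow S" for b :: 'i
    proof -
      have "Sig \<subseteq> Pow S" using assms(3) by (simp add: sigma_algebra_iff2)
      then show ?thesis using SI_mono[OF assms(1-3), of b] G_sub[of S Sig L tau] by blast
    qed
    then have "(\<Union>\<beta>\<in>{\<beta>. \<beta> < a}. SI \<beta>) \<subseteq> Pow S" by blast
    then show ?thesis using eq sigma_algebra_sigma_sets by metis
  qed
qed

end

theorem proposition3p9:
  fixes S :: "'a set" and Sig Sig0 :: "'a set set" and L :: "'l set"
    and tau :: "'l \<Rightarrow> 'a \<Rightarrow> 'a set \<Rightarrow> real" and lam :: "'i::wellorder"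
  assumes "lmp S Sig L tau"
    and "sigma_algebra S Sig0" and "Sig0 \<subseteq> Sig"
    and "rel_of S Sig0 = relT_of S L tau Sig0"
    and "is_limit lam"
  shows "rel_of S (Sig_iter S Sig L tau Sig0 lam) = relT_of S L tau (Sig_iter S Sig L tau Sig0 lam)"
proof -
  have saS: "sigma_algebra S Sig" using assms(1) unfolding lmp_def by blast
  have SigP: "Sig \<subseteq> Pow S" using saS by (simp add: sigma_algebra_iff2)
  let ?SI = "Sig_iter S Sig L tau Sig0 :: 'i \<Rightarrow> _"
  let ?U = "\<Union>\<beta>\<in>{\<beta>. \<beta> < lam}. ?SI \<beta>"
  have eq: "?SI lam = sigma_sets S ?U" by (rule SI_limit[OF assms(5)])
  have mono: "b < c \<Longrightarrow> ?SI b \<subseteq> ?SI c" for b c :: 'i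
    using SI_mono[OF assms(3,4) saS, of c] by blast
  have mono': "b \<le> c \<Longrightarrow> ?SI b \<subseteq> ?SI c" for b c :: 'i
    using mono by (metis order_le_less order_refl)
  have subSig: "?SI b \<subseteq> Sig" for b :: 'i
    using SI_mono[OF assms(3,4) saS, of b] G_sub[of S Sig L tau] by blast
  have sig: "sigma_algebra S (?SI b)" for b :: 'i
    using SI_sigma[OF assms(3,4) saS assms(2)] by blast
  have UP: "?U \<subseteq> Pow S" using subSig SigP by blast
  have basic: "\<exists>c. c < lam \<and> b < c \<and> ?SI c = G_op S Sig L tau (?SI b)" if bl: "b < lam" for b
  proof -
    obtain c where c: "is_succ_of c b" "c < lam" using succ_below[OF assms(5) bl] by blast
    then show ?thesis using SI_succ[OF c(1)] unfolding is_succ_of_def by blast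
  qed
  have lamU: "b < lam \<Longrightarrow> ?SI b \<subseteq> ?SI lam" for b using eq by (auto intro: sigma_sets.Basic)
  show ?thesis
  proof (intro equalityI subsetI)
    fix p assume "p \<in> relT_of S L tau (?SI lam)"
    then obtain s t where p: "p = (s,t)" "s\<in>S" "t\<in>S"
      and agree: "\<forall>a\<in>L. \<forall>E\<in>?SI lam. tau a s E = tau a t E" unfolding relT_of_def by blast
    have "\<forall>A\<in>?SI lam. s\<in>A \<longleftrightarrow> t\<in>A"
    proof
      fix A assume "A \<in> ?SI lam"
      then have "A \<in> sigma_sets S ?U" using eq by simp
      then show "s\<in>A \<longleftrightarrow> t\<in>A"
      proof (induction rule: sigma_sets.induct)
        case (Basic A)
        then obtain b where b: "b<lam" "A \<in> ?SI b" by blast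
        obtain c where c: "c < lam" "b < c" "?SI c = G_op S Sig L tau (?SI b)" using basic[OF b(1)] by blast
        have A: "A \<in> G_op S Sig L tau (?SI b)" using mono[OF c(2)] b(2) c(3) by blast
        have "(s,t) \<in> relT_of S L tau (?SI b)" "(t,s) \<in> relT_of S L tau (?SI b)"
          using agree lamU[OF b(1)] p unfolding relT_of_def by auto
        then show ?case using A unfolding G_op_def closed_sets_def R_closed_def by blast
      next
        case (Compl a)
        then show ?case using p by blast
      qed auto
    qed
    then show "p \<in> rel_of S (?SI lam)" using p unfolding rel_of_def by auto
  next
    fix p assume "p \<in> rel_of S (?SI lam)"
    then obtain s t where p: "p = (s,t)" "s\<in>S" "t\<in>S"
      and agree: "\<forall>A\<in>?SI lam. s\<in>A \<longleftrightarrow> t\<in>A" unfolding rel_of_def by blast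
    have "tau a s E = tau a t E" if a: "a\<in>L" and E: "E \<in> ?SI lam" for a E
    proof -
      define M where "M x = measure_of S Sig (\<lambda>E. ennreal (tau a x E))" for x
      have ms: "measure_space S Sig (\<lambda>E. ennreal (tau a x E))" if "x \<in> S" for x
        using assms(1) a that unfolding lmp_def by blast
      have nn: "0 \<le> tau a x E" if "x\<in>S" "E\<in>Sig" for x E
        using assms(1) a that unfolding lmp_def by blast
      have em: "emeasure (M x) E = ennreal (tau a x E)" if "x\<in>S" "E\<in>Sig" for x E
        unfolding M_def using ms[OF that(1)] that(2) unfolding measure_space_def
        by (intro emeasure_measure_of_sigma) auto
      have setsM: "sets (M x) = Sig" and spM: "space (M x) = S" for x
        unfolding M_def using sigma_algebra.sets_measure_of_eq[OF saS] 
          sigma_algebra.space_measure_of_eq[OF saS] by auto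
      have meas: "(\<lambda>x. tau a x B) \<in> borel_measurable (measure_of S Sig (\<lambda>_. 0))" if "B \<in> Sig" for B
        using assms(1) a that unfolding lmp_def by blast
      obtain b0 where b0: "b0 < lam" using assms(5) unfolding is_limit_def by blast
      have SU: "S \<in> ?U" using b0 sa_top[OF sig] by blast
      have Ust: "Int_stable ?U" unfolding Int_stable_def
      proof (intro ballI)
        fix A B assume "A \<in> ?U" "B \<in> ?U"
        then obtain b c where bc: "b < lam" "c < lam" "A \<in> ?SI b" "B \<in> ?SI c" by blast
        show "A \<inter> B \<in> ?U"
        proof (cases "b \<le> c")
          case True
          then have "A \<in> ?SI c" using mono' bc by blast
          then have "A \<inter> B \<in> ?SI c" using bc sa_Int[OF sig[of c]] by blast
          then show ?thesis using bc by blast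
        next
          case False
          then have "B \<in> ?SI b" using mono' bc by (metis not_le order_less_imp_le subsetD)
          then have "A \<inter> B \<in> ?SI b" using bc sa_Int[OF sig[of b]] by blast
          then show ?thesis using bc by blast
        qed
      qed
      have E': "E \<in> sigma_sets S ?U" using E eq by simp
      have sUSig: "sigma_sets S ?U \<subseteq> Sig"
        using subSig sigma_algebra.sigma_sets_subset[OF saS] by (metis UN_least)
      have bfact: "tau a s A = tau a t A" if "A \<in> ?U" for A
      proof -
        from that obtain b where b: "b<lam" "A \<in> ?SI b" by blast
        obtain c where c: "c < lam" "b < c" "?SI c = G_op S Sig L tau (?SI b)" using basic[OF b(1)] by blast
        have ASig: "A \<in> Sig" using subSig b by blast
        define B where "B = {x\<in>S. tau a x A = tau a s A}"
        have Beq: "B = (\<lambda>x. tau a x A) -` {tau a s A} \<inter> space (measure_of S Sig (\<lambda>_. 0))"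
          unfolding B_def sigma_algebra.space_measure_of_eq[OF saS] by blast
        have "(\<lambda>x. tau a x A) -` {tau a s A} \<inter> space (measure_of S Sig (\<lambda>_. 0)) \<in> sets (measure_of S Sig (\<lambda>_. 0))"
          by (rule borel_measurable_vimage[OF meas[OF ASig]])
        then have "B \<in> Sig" unfolding Beq sigma_algebra.sets_measure_of_eq[OF saS] .
        moreover have "R_closed (relT_of S L tau (?SI b)) B"
          unfolding R_closed_def B_def relT_of_def using a b(2) by auto
        ultimately have "B \<in> ?SI c" using c(3) unfolding G_op_def closed_sets_def by auto
        then have "B \<in> ?SI lam" using lamU[OF c(1)] by blast
        moreover have "s \<in> B" using p unfolding B_def by simp
        ultimately have "t \<in> B" using agree by blast
        then show ?thesis unfolding B_def by auto
      qed
      have emp: "{} \<in> Sig" using saS by (simp add: sigma_algebra_iff2)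
      have SSig: "S \<in> Sig" using sa_top[OF saS] .
      have ennEq: "tau a s B = tau a t B" if "ennreal (tau a s B) = ennreal (tau a t B)" "B \<in> Sig" for B
        using that nn[OF p(2) that(2)] nn[OF p(3) that(2)] by simp
      from Ust UP E' show ?thesis
      proof (induction E rule: sigma_sets_induct_disjoint)
        case (basic A)
        then show ?case using bfact by blast
      next
        case empty
        have "ennreal (tau a x {}) = 0" if "x \<in> S" for x
          using em[OF that emp] by simp
        then show ?case using p ennEq emp by simp
      next
        case (compl A)
        have AS: "A \<in> Sig" using compl(1) sUSig by blast
        have SA: "S - A \<in> Sig" using AS SSig saS by (simp add: sigma_algebra_iff2)
        have c: "ennreal (tau a x (S - A)) = ennreal (tau a x S) - ennreal (tau a x A)" if "x \<in> S" for x
        proof -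
          have "emeasure (M x) (space (M x) - A) = emeasure (M x) (space (M x)) - emeasure (M x) A"
            by (rule emeasure_compl) (use AS setsM em[OF that AS] in auto)
          then show ?thesis using spM em[OF that AS] em[OF that SSig] em[OF that SA] by simp
        qed
        have "ennreal (tau a s (S - A)) = ennreal (tau a t (S - A))"
          using c[OF p(2)] c[OF p(3)] compl(2) bfact[OF SU] by simp
        then show ?case using ennEq SA by blast
      next
        case (union A)
        have AS: "range A \<subseteq> Sig" using union(2) sUSig by blast
        have US: "(\<Union>i. A i) \<in> Sig" using AS saS by (simp add: sigma_algebra_iff2)
        have u: "ennreal (tau a x (\<Union>i. A i)) = (\<Sum>i. ennreal (tau a x (A i)))" if "x \<in> S" for x
        proof -
          have "(\<Sum>i. emeasure (M x) (A i)) = emeasure (M x) (\<Union>i. A i)"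
            by (rule suminf_emeasure) (use AS setsM union(1) in auto)
          moreover have "(\<Sum>i. emeasure (M x) (A i)) = (\<Sum>i. ennreal (tau a x (A i)))"
            using em[OF that] AS by (intro suminf_cong) blast
          ultimately show ?thesis using em[OF that US] by simp
        qed
        show ?case using u[OF p(2)] u[OF p(3)] union(3) US ennEq by simp
      qed
    qed
    then show "p \<in> relT_of S L tau (?SI lam)" using p unfolding relT_of_def by auto
  qed
qed

end
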